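(* Let $\mathcal H$ be a finite-dimensional Hilbert space, $L\in\mathbb N$, and $P_1,\dots,P_L$ orthogonal projections on $\mathcal H$ such that $[P_i,P_j]\ne0$ implies $|i-j|=1$ or $\{i,j\}=\{1,L\}$. Fix $1<n<L$, identify indices cyclically ($i\equiv i+L$), and set $H_L=\sum_{i=1}^LP_i$ and $H_{n,k}=\sum_{i=k}^{n+k-1}P_i$ for $k=1,\dots,L$. Assume $\ker H_L\ne\{0\}$. Then $$\operatorname{gap}(H_L)\ge\frac{n}{n-1}\Big(\min_{1\le k\le L}\operatorname{gap}(H_{n,k})-\frac1n\Big).$$
   Context: For a nonnegative self-adjoint operator $H$ on a finite-dimensional Hilbert space with nontrivial kernel, $\operatorname{gap}(H)=\inf\{\langle\psi,H\psi\rangle:\psi\in(\ker H)^\perp,\|\psi\|=1\}$. *)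

theory Defs
  imports "Jordan_Normal_Form.Schur_Decomposition" "HOL-Library.Extended_Real"
begin

text \<open>The finite-dimensional Hilbert space is modelled as complex d-space (vectors in carrier_vec d),
with inner product  <psi, phi> = phi \<bullet>c psi  (antilinear in the first argument).\<close>

definition cinner :: "complex vec \<Rightarrow> complex vec \<Rightarrow> complex" where
  "cinner \<psi> \<phi> = \<phi> \<bullet>c \<psi>"

definition orth_proj :: "nat \<Rightarrow> complex mat \<Rightarrow> bool" where
  "orth_proj d P \<longleftrightarrow> P \<in> carrier_mat d d \<and> P * P = P \<and> mat_adjoint P = P"

definition kernel :: "nat \<Rightarrow> complex mat \<Rightarrow> complex vec set" where
  "kernel d H = {v \<in> carrier_vec d. H *\<^sub>v v = 0\<^sub>v d}"

definition orth_compl :: "nat \<Rightarrow> complex vec set \<Rightarrow> complex vec set" where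
  "orth_compl d S = {\<psi> \<in> carrier_vec d. \<forall>v\<in>S. cinner \<psi> v = 0}"

text \<open>Spectral gap; Inf of the empty set is +infinity (only relevant when H = 0).
  For self-adjoint H the quadratic form is real, so taking Re loses nothing.\<close>
definition gap :: "nat \<Rightarrow> complex mat \<Rightarrow> ereal" where
  "gap d H = Inf {ereal (Re (cinner \<psi> (H *\<^sub>v \<psi>))) | \<psi>.
                  \<psi> \<in> orth_compl d (kernel d H) \<and> cinner \<psi> \<psi> = 1}"

definition opsum :: "nat \<Rightarrow> (nat \<Rightarrow> complex mat) \<Rightarrow> nat set \<Rightarrow> complex mat" where
  "opsum d F I = mat d d (\<lambda>(a, b). \<Sum>i\<in>I. F i $$ (a, b))"

text \<open>Cyclic identification of indices i == i + L, representatives in {1..L}.\<close>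
definition cyc :: "nat \<Rightarrow> nat \<Rightarrow> nat" where
  "cyc L i = (i + L - 1) mod L + 1"

end

theory Submission
  imports "Jordan_Normal_Form.Matrix_Kernel" Defs
begin

lemma cinner_expand:
  assumes "x \<in> carrier_vec d" "y \<in> carrier_vec d"
  shows "cinner x y = (\<Sum>i<d. y $ i * cnj (x $ i))"
  using assms unfolding cinner_def scalar_prod_def by (auto intro!: sum.cong)

lemma cinner_add_left:
  assumes "x \<in> carrier_vec d" "y \<in> carrier_vec d" "z \<in> carrier_vec d"
  shows "cinner (x + y) z = cinner x z + cinner y z"
proof -
  have "x + y \<in> carrier_vec d" using assms by simp
  then show ?thesis using assms by (simp add: cinner_expand[of "x+y" d z] cinner_expand[of x d z] cinner_expand[of y d z] ring_distribs sum.distrib)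
qed

lemma cinner_add_right:
  assumes "x \<in> carrier_vec d" "y \<in> carrier_vec d" "z \<in> carrier_vec d"
  shows "cinner z (x + y) = cinner z x + cinner z y"
proof -
  have "x + y \<in> carrier_vec d" using assms by simp
  then show ?thesis using assms by (simp add: cinner_expand ring_distribs sum.distrib)
qed

lemma cinner_smult_left:
  assumes "x \<in> carrier_vec d" "y \<in> carrier_vec d"
  shows "cinner (a \<cdot>\<^sub>v x) y = cnj a * cinner x y"
proof -
  have "a \<cdot>\<^sub>v x \<in> carrier_vec d" using assms by simp
  then show ?thesis using assms by (simp add: cinner_expand sum_distrib_left ac_simps)
qed

lemma cinner_smult_right:
  assumes "x \<in> carrier_vec d" "y \<in> carrier_vec d"
  shows "cinner x (a \<cdot>\<^sub>v y) = a * cinner x y"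
proof -
  have "a \<cdot>\<^sub>v y \<in> carrier_vec d" using assms by simp
  then show ?thesis using assms by (simp add: cinner_expand sum_distrib_left ac_simps)
qed

lemma cinner_commute:
  assumes "x \<in> carrier_vec d" "y \<in> carrier_vec d"
  shows "cinner y x = cnj (cinner x y)"
  using assms by (simp add: cinner_expand cnj_sum mult.commute)

lemma cinner_zero_right:
  assumes "x \<in> carrier_vec d"
  shows "cinner x (0\<^sub>v d) = 0"
  using assms by (simp add: cinner_expand)

lemma cinner_zero_left:
  assumes "x \<in> carrier_vec d"
  shows "cinner (0\<^sub>v d) x = 0"
  using assms by (simp add: cinner_expand[of "0\<^sub>v d" d x])

lemma cinner_self_Re:
  assumes "x \<in> carrier_vec d"
  shows "Re (cinner x x) = (\<Sum>i<d. (Re (x$i))\<^sup>2 + (Im (x$i))\<^sup>2)"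
    and "Im (cinner x x) = 0"
  using assms by (simp_all add: cinner_expand Re_sum Im_sum power2_eq_square)

lemma cinner_self_zero:
  assumes "x \<in> carrier_vec d" "Re (cinner x x) = 0"
  shows "x = 0\<^sub>v d"
proof -
  have "\<forall>i\<in>{..<d}. (Re (x$i))\<^sup>2 + (Im (x$i))\<^sup>2 = 0"
    using assms(2) unfolding cinner_self_Re(1)[OF assms(1)]
    by (subst sum_nonneg_eq_0_iff[symmetric]) auto
  then have "\<And>i. i < d \<Longrightarrow> x $ i = 0"
    by (auto simp: complex_eq_iff sum_power2_eq_zero_iff)
  then show ?thesis using assms(1) by (intro eq_vecI) auto
qed

lemma cinner_self_real:
  assumes "x \<in> carrier_vec d"
  shows "cinner x x = complex_of_real (Re (cinner x x))"
  using cinner_self_Re(2)[OF assms] by (simp add: complex_eq_iff)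

lemma cinner_self_nonneg:
  assumes "x \<in> carrier_vec d"
  shows "Re (cinner x x) \<ge> 0"
  unfolding cinner_self_Re(1)[OF assms] by (intro sum_nonneg) auto

lemma mult_expand:
  assumes "H \<in> carrier_mat d d" "v \<in> carrier_vec d" "i < d"
  shows "(H *\<^sub>v v) $ i = (\<Sum>j<d. H $$ (i,j) * v $ j)"
  using assms by (auto simp: scalar_prod_def row_def intro!: sum.cong)

definition herm :: "nat \<Rightarrow> complex mat \<Rightarrow> bool" where
  "herm d H \<longleftrightarrow> H \<in> carrier_mat d d \<and> (\<forall>i<d. \<forall>j<d. H $$ (i,j) = cnj (H $$ (j,i)))"

lemma orth_proj_herm:
  assumes "orth_proj d P" shows "herm d P"
proof -
  have P: "P \<in> carrier_mat d d" and adj: "mat_adjoint P = P" using assms unfolding orth_proj_def by auto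
  show ?thesis unfolding herm_def
  proof (intro conjI allI impI P)
    fix i j assume i: "i < d" and j: "j < d"
    have "P $$ (i,j) = mat_adjoint P $$ (i,j)" using adj by simp
    also have "\<dots> = cnj (P $$ (j,i))"
      unfolding mat_adjoint_def using P i j by (simp add: mat_of_rows_def)
    finally show "P $$ (i,j) = cnj (P $$ (j,i))" .
  qed
qed

lemma herm_mult:
  assumes "herm d H" "u \<in> carrier_vec d" "v \<in> carrier_vec d"
  shows "cinner u (H *\<^sub>v v) = cinner (H *\<^sub>v u) v"
proof -
  have H: "H \<in> carrier_mat d d" and h: "\<And>i j. i<d \<Longrightarrow> j<d \<Longrightarrow> H $$ (i,j) = cnj (H $$ (j,i))"
    using assms(1) unfolding herm_def by blast+
  have hh: "\<And>i j. i<d \<Longrightarrow> j<d \<Longrightarrow> cnj (H $$ (j,i)) = H $$ (i,j)" using h by (metis complex_cnj_cnj)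
  have Hv: "H *\<^sub>v v \<in> carrier_vec d" and Hu: "H *\<^sub>v u \<in> carrier_vec d" using H assms by auto
  have "cinner u (H *\<^sub>v v) = (\<Sum>i<d. (\<Sum>j<d. H $$ (i,j) * v $ j) * cnj (u $ i))"
    unfolding cinner_expand[OF assms(2) Hv]
    by (intro sum.cong refl) (simp add: mult_expand[OF H assms(3)])
  also have "\<dots> = (\<Sum>i<d. \<Sum>j<d. H $$ (i,j) * v $ j * cnj (u $ i))"
    by (simp only: sum_distrib_right)
  also have "\<dots> = (\<Sum>j<d. \<Sum>i<d. H $$ (i,j) * v $ j * cnj (u $ i))"
    by (rule sum.swap)
  also have "\<dots> = (\<Sum>j<d. v $ j * cnj (\<Sum>i<d. H $$ (j,i) * u $ i))"
    unfolding cnj_sum sum_distrib_left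
    by (intro sum.cong refl) (simp add: hh)
  also have "\<dots> = cinner (H *\<^sub>v u) v"
    unfolding cinner_expand[OF Hu assms(3)]
    by (intro sum.cong refl) (simp add: mult_expand[OF H assms(2)])
  finally show ?thesis .
qed



lemma opsum_carrier[simp]: "opsum d F I \<in> carrier_mat d d"
  unfolding opsum_def by simp

lemma opsum_index: "a < d \<Longrightarrow> b < d \<Longrightarrow> opsum d F I $$ (a,b) = (\<Sum>i\<in>I. F i $$ (a,b))"
  unfolding opsum_def by simp

lemma opsum_mult:
  assumes "\<And>i. i\<in>I \<Longrightarrow> F i \<in> carrier_mat d d" "v \<in> carrier_vec d" "a < d"
  shows "(opsum d F I *\<^sub>v v) $ a = (\<Sum>i\<in>I. (F i *\<^sub>v v) $ a)"
proof -
  have "(opsum d F I *\<^sub>v v) $ a = (\<Sum>j<d. (\<Sum>i\<in>I. F i $$ (a,j)) * v$j)"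
    unfolding mult_expand[OF opsum_carrier assms(2,3)]
    by (intro sum.cong refl) (simp add: opsum_index assms(3))
  also have "\<dots> = (\<Sum>i\<in>I. \<Sum>j<d. F i $$ (a,j) * v$j)"
    by (simp add: sum_distrib_right sum.swap[of _ I])
  also have "\<dots> = (\<Sum>i\<in>I. (F i *\<^sub>v v)$a)"
    by (intro sum.cong refl) (simp add: mult_expand[OF assms(1) assms(2,3)])
  finally show ?thesis .
qed

lemma opsum_herm:
  assumes "\<And>i. i\<in>I \<Longrightarrow> herm d (F i)"
  shows "herm d (opsum d F I)"
  unfolding herm_def
proof (intro conjI allI impI opsum_carrier)
  fix a b assume a: "a < d" and b: "b < d"
  have "\<And>i. i \<in> I \<Longrightarrow> F i $$ (a,b) = cnj (F i $$ (b,a))"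
    using assms a b unfolding herm_def by blast
  then show "opsum d F I $$ (a, b) = cnj (opsum d F I $$ (b, a))"
    using a b by (simp add: opsum_index cnj_sum)
qed

lemma cinner_sum_right:
  assumes x: "x \<in> carrier_vec d" and y: "y \<in> carrier_vec d"
    and g: "\<And>j. j \<in> J \<Longrightarrow> g j \<in> carrier_vec d"
    and ya: "\<And>a. a < d \<Longrightarrow> y $ a = (\<Sum>j\<in>J. g j $ a)"
  shows "cinner x y = (\<Sum>j\<in>J. cinner x (g j))"
proof -
  have "cinner x y = (\<Sum>i<d. (\<Sum>j\<in>J. g j $ i) * cnj (x $ i))"
    unfolding cinner_expand[OF x y] by (intro sum.cong refl) (simp add: ya)
  also have "\<dots> = (\<Sum>j\<in>J. \<Sum>i<d. g j $ i * cnj (x $ i))"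
    by (simp add: sum_distrib_right sum.swap[of _ J])
  also have "\<dots> = (\<Sum>j\<in>J. cinner x (g j))"
    by (intro sum.cong refl) (simp add: cinner_expand[OF x g])
  finally show ?thesis .
qed

lemma cinner_sum_left:
  assumes x: "x \<in> carrier_vec d" and y: "y \<in> carrier_vec d"
    and g: "\<And>j. j \<in> J \<Longrightarrow> g j \<in> carrier_vec d"
    and xa: "\<And>a. a < d \<Longrightarrow> x $ a = (\<Sum>j\<in>J. g j $ a)"
  shows "cinner x y = (\<Sum>j\<in>J. cinner (g j) y)"
proof -
  have "cinner y x = (\<Sum>j\<in>J. cinner y (g j))"
    by (rule cinner_sum_right[OF y x g xa])
  then have "cnj (cinner y x) = (\<Sum>j\<in>J. cnj (cinner y (g j)))"
    by (simp add: cnj_sum)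
  then show ?thesis
    using cinner_commute[OF y x] cinner_commute[OF y g] by simp
qed

lemma kernel_basis_orth:
  assumes Hc: "H \<in> carrier_mat d d" and v: "v \<in> carrier_vec d" and B: "kernel.basis d H B"
  and orth: "\<And>u. u \<in> B \<Longrightarrow> cinner u v = 0"
  shows "\<forall>x \<in> mat_kernel H. cinner x v = 0"
proof -
  interpret kernel d d H by (unfold_locales) (rule Hc)
  have sp: "span B = mat_kernel H" and Bs: "B \<subseteq> mat_kernel H" using B unfolding Ker.basis_def by auto
  have kc: "\<And>x. x \<in> mat_kernel H \<Longrightarrow> x \<in> carrier_vec d" using mat_kernelD[OF Hc] by blast
  have "submodule class_ring {x \<in> mat_kernel H. cinner x v = 0} VK"
    unfolding submodule_def
  proof (intro conjI allI impI)
    show "Module.module class_ring VK" by (rule Ker.module_axioms)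
  next
    show "{x \<in> mat_kernel H. cinner x v = 0} \<subseteq> carrier VK" by auto
  next
    fix a b assume a: "a \<in> {x \<in> mat_kernel H. cinner x v = 0}" and b: "b \<in> {x \<in> mat_kernel H. cinner x v = 0}"
    then show "a \<oplus>\<^bsub>VK\<^esub> b \<in> {x \<in> mat_kernel H. cinner x v = 0}"
      using Ker.a_closed[of a b] kc cinner_add_left[OF kc kc v, of a b] by auto
  next
    show "\<zero>\<^bsub>VK\<^esub> \<in> {x \<in> mat_kernel H. cinner x v = 0}"
      using Ker.zero_closed cinner_zero_left[OF v] by auto
  next
    fix c a assume a: "a \<in> {x \<in> mat_kernel H. cinner x v = 0}"
    then show "c \<odot>\<^bsub>VK\<^esub> a \<in> {x \<in> mat_kernel H. cinner x v = 0}"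
      using Ker.smult_closed[of c a] kc cinner_smult_left[OF kc v, of a c] by auto
  qed
  then have "span B \<subseteq> {x \<in> mat_kernel H. cinner x v = 0}"
    by (intro Ker.span_is_subset) (use Bs orth in auto)
  then show ?thesis using sp by auto
qed

lemma decomp:
  assumes H: "herm d H" and phi: "\<phi> \<in> carrier_vec d"
  shows "\<exists>\<chi>\<in>carrier_vec d. \<exists>\<phi>0\<in>carrier_vec d. \<phi> = H *\<^sub>v \<chi> + \<phi>0 \<and> H *\<^sub>v \<phi>0 = 0\<^sub>v d"
proof -
  have Hc: "H \<in> carrier_mat d d" using H unfolding herm_def by blast
  obtain B where finB: "finite B" and bas: "kernel.basis d H B"
    using kernel_basis_exists[OF Hc] by blast
  have Bsub: "B \<subseteq> mat_kernel H"
  proof -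
    interpret kernel d d H by (unfold_locales) (rule Hc)
    show ?thesis using bas unfolding Ker.basis_def by auto
  qed
  have Bcar: "\<And>u. u\<in>B \<Longrightarrow> u \<in> carrier_vec d" and HB: "\<And>u. u \<in> B \<Longrightarrow> H *\<^sub>v u = 0\<^sub>v d"
    using Bsub mat_kernelD[OF Hc] by auto
  define K where "K = mat d d (\<lambda>(a,b). \<Sum>u\<in>B. u$a * cnj (u$b))"
  have Kc: "K \<in> carrier_mat d d" by (simp add: K_def)
  have Kv: "(K *\<^sub>v w) $ a = (\<Sum>u\<in>B. (cinner u w \<cdot>\<^sub>v u) $ a)" if w: "w \<in> carrier_vec d" and a: "a < d" for w a
  proof -
    have "(K *\<^sub>v w) $ a = (\<Sum>j<d. (\<Sum>u\<in>B. u$a * cnj (u$j)) * w $ j)"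
      unfolding mult_expand[OF Kc w a] by (intro sum.cong refl) (simp add: K_def a)
    also have "\<dots> = (\<Sum>u\<in>B. \<Sum>j<d. u$a * cnj (u$j) * w $ j)"
      by (simp add: sum_distrib_right sum.swap[of _ B])
    also have "\<dots> = (\<Sum>u\<in>B. (cinner u w \<cdot>\<^sub>v u) $ a)"
    proof (intro sum.cong refl)
      fix u assume "u \<in> B"
      then have u: "u \<in> carrier_vec d" by (rule Bcar)
      show "(\<Sum>j<d. u$a * cnj (u$j) * w $ j) = (cinner u w \<cdot>\<^sub>v u) $ a"
        using u a by (simp add: cinner_expand[OF u w] sum_distrib_left sum_distrib_right ac_simps)
    qed
    finally show ?thesis .
  qed
  have BI: "\<And>u j c. u \<in> B \<Longrightarrow> j < d \<Longrightarrow> (c \<cdot>\<^sub>v u) $ j = c * u $ j"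
    using Bcar by (metis carrier_vecD index_smult_vec(1))
  have HK: "H *\<^sub>v (K *\<^sub>v w) = 0\<^sub>v d" if w: "w \<in> carrier_vec d" for w
  proof (rule eq_vecI)
    show "dim_vec (H *\<^sub>v (K *\<^sub>v w)) = dim_vec (0\<^sub>v d)" using Hc by simp
    fix a assume "a < dim_vec (0\<^sub>v d)"
    then have a: "a < d" by simp
    have Kw: "K *\<^sub>v w \<in> carrier_vec d" using Kc w by simp
    have "(H *\<^sub>v (K *\<^sub>v w)) $ a = (\<Sum>j<d. H $$ (a,j) * (\<Sum>u\<in>B. cinner u w * u $ j))"
      unfolding mult_expand[OF Hc Kw a] by (intro sum.cong refl) (simp add: Kv[OF w] BI)
    also have "\<dots> = (\<Sum>u\<in>B. cinner u w * (\<Sum>j<d. H $$ (a,j) * u $ j))"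
      by (simp add: sum_distrib_left sum.swap[of _ B] ac_simps)
    also have "\<dots> = (\<Sum>u\<in>B. cinner u w * (H *\<^sub>v u) $ a)"
      by (intro sum.cong refl) (simp add: mult_expand[OF Hc Bcar a])
    also have "\<dots> = 0" using HB a by simp
    finally show "(H *\<^sub>v (K *\<^sub>v w)) $ a = 0\<^sub>v d $ a" using a by simp
  qed
  define M where "M = H * H + K"
  have Mc: "M \<in> carrier_mat d d" using Hc Kc by (simp add: M_def)
  have Mv: "M *\<^sub>v v = H *\<^sub>v (H *\<^sub>v v) + K *\<^sub>v v" if v: "v \<in> carrier_vec d" for v
  proof -
    have HH: "H * H \<in> carrier_mat d d" using Hc by simp
    show ?thesis unfolding M_def add_mult_distrib_mat_vec[OF HH Kc v] assoc_mult_mat_vec[OF Hc Hc v] ..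
  qed
  have inj: "v = 0\<^sub>v d" if v: "v \<in> carrier_vec d" and Mz: "M *\<^sub>v v = 0\<^sub>v d" for v
  proof -
    have Hv: "H *\<^sub>v v \<in> carrier_vec d" using Hc v by simp
    have HHv: "H *\<^sub>v (H *\<^sub>v v) \<in> carrier_vec d" using Hc v by simp
    have Kv': "K *\<^sub>v v \<in> carrier_vec d" using Kc v by simp
    have "0 = cinner v (M *\<^sub>v v)" using Mz cinner_zero_right[OF v] by simp
    also have "\<dots> = cinner v (H *\<^sub>v (H *\<^sub>v v)) + cinner v (K *\<^sub>v v)"
      unfolding Mv[OF v] by (rule cinner_add_right[OF HHv Kv' v])
    also have "cinner v (H *\<^sub>v (H *\<^sub>v v)) = cinner (H *\<^sub>v v) (H *\<^sub>v v)"
      by (rule herm_mult[OF H v Hv])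
    also have "cinner v (K *\<^sub>v v) = (\<Sum>u\<in>B. cinner v (cinner u v \<cdot>\<^sub>v u))"
      by (rule cinner_sum_right[OF v Kv']) (use Bcar Kv[OF v] in auto)
    also have "\<dots> = (\<Sum>u\<in>B. complex_of_real ((Re (cinner u v))\<^sup>2 + (Im (cinner u v))\<^sup>2))"
      by (intro sum.cong refl) (simp add: cinner_smult_right[OF v Bcar] cinner_commute[OF Bcar v] complex_mult_cnj mult.commute)
    finally have eq0: "0 = cinner (H *\<^sub>v v) (H *\<^sub>v v) + (\<Sum>u\<in>B. complex_of_real ((Re (cinner u v))\<^sup>2 + (Im (cinner u v))\<^sup>2))" .
    have eq: "0 = Re (cinner (H *\<^sub>v v) (H *\<^sub>v v)) + (\<Sum>u\<in>B. (Re (cinner u v))\<^sup>2 + (Im (cinner u v))\<^sup>2)"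
      using arg_cong[OF eq0, of Re] by (simp only: plus_complex.sel Re_sum Re_complex_of_real zero_complex.sel)
    have n1: "Re (cinner (H *\<^sub>v v) (H *\<^sub>v v)) \<ge> 0" by (rule cinner_self_nonneg[OF Hv])
    have n2: "(\<Sum>u\<in>B. (Re (cinner u v))\<^sup>2 + (Im (cinner u v))\<^sup>2) \<ge> 0" by (intro sum_nonneg) auto
    have "Re (cinner (H *\<^sub>v v) (H *\<^sub>v v)) = 0" using eq n1 n2 by linarith
    then have Hv0: "H *\<^sub>v v = 0\<^sub>v d" by (rule cinner_self_zero[OF Hv])
    have "(\<Sum>u\<in>B. (Re (cinner u v))\<^sup>2 + (Im (cinner u v))\<^sup>2) = 0" using eq n1 n2 by linarith
    then have "\<forall>u\<in>B. (Re (cinner u v))\<^sup>2 + (Im (cinner u v))\<^sup>2 = 0" using finB by (subst sum_nonneg_eq_0_iff[symmetric]) auto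
    then have orth: "\<And>u. u \<in> B \<Longrightarrow> cinner u v = 0" by (auto simp: complex_eq_iff sum_power2_eq_zero_iff)
    have vk: "v \<in> mat_kernel H" using Hv0 v by (intro mat_kernelI[OF Hc]) auto
    have "cinner v v = 0" using kernel_basis_orth[OF Hc v bas orth] vk by blast
    then show "v = 0\<^sub>v d" using cinner_self_zero[OF v] by simp
  qed
  have "det M \<noteq> 0" using det_0_iff_vec_prod_zero[OF Mc] inj by auto
  from det_non_zero_imp_unit[OF Mc this, unfolded Units_def, of "()"]
  obtain N where N: "N \<in> carrier_mat d d" and MN: "M * N = 1\<^sub>m d"
    by (auto simp: ring_mat_def)
  define w where "w = N *\<^sub>v \<phi>"
  have w: "w \<in> carrier_vec d" using N phi by (simp add: w_def)
  have "\<phi> = M *\<^sub>v w" unfolding w_def using Mc N phi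
    by (simp add: assoc_mult_mat_vec[symmetric] MN)
  also have "\<dots> = H *\<^sub>v (H *\<^sub>v w) + K *\<^sub>v w" by (rule Mv[OF w])
  finally show ?thesis
    using HK[OF w] Hc Kc w by (intro bexI[of _ "H *\<^sub>v w"] bexI[of _ "K *\<^sub>v w"]) auto
qed


definition Qf :: "complex mat \<Rightarrow> complex vec \<Rightarrow> real" where
  "Qf H v = Re (cinner v (H *\<^sub>v v))"
definition Sf :: "complex mat \<Rightarrow> complex vec \<Rightarrow> real" where
  "Sf H v = Re (cinner (H *\<^sub>v v) (H *\<^sub>v v))"

lemma bilin_expand:
  assumes x: "x \<in> carrier_vec d" and y: "y \<in> carrier_vec d" and z: "z \<in> carrier_vec d" and w: "w \<in> carrier_vec d"
  shows "Re (cinner (x + complex_of_real t \<cdot>\<^sub>v y) (z + complex_of_real t \<cdot>\<^sub>v w)) =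
    Re (cinner x z) + t * Re (cinner x w) + t * Re (cinner y z) + t\<^sup>2 * Re (cinner y w)"
proof -
  have ty: "complex_of_real t \<cdot>\<^sub>v y \<in> carrier_vec d" and tw: "complex_of_real t \<cdot>\<^sub>v w \<in> carrier_vec d"
    using y w by auto
  have "cinner (x + complex_of_real t \<cdot>\<^sub>v y) (z + complex_of_real t \<cdot>\<^sub>v w)
      = cinner x z + complex_of_real t * cinner x w + complex_of_real t * cinner y z
        + complex_of_real t * complex_of_real t * cinner y w"
    using x y z w ty tw
    by (simp add: cinner_add_left[OF x ty] cinner_add_right cinner_smult_left cinner_smult_right
        add_carrier_vec algebra_simps)
  then show ?thesis by (simp add: power2_eq_square)
qed

lemma herm_Q_real:
  assumes H: "herm d H" and v: "v \<in> carrier_vec d"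
  shows "Re (cinner (H *\<^sub>v v) v) = Qf H v"
proof -
  have Hc: "H \<in> carrier_mat d d" using H unfolding herm_def by blast
  have Hv: "H *\<^sub>v v \<in> carrier_vec d" using Hc v by simp
  show ?thesis unfolding Qf_def cinner_commute[OF v Hv] by simp
qed

lemma gap_lower:
  assumes H: "herm d H" and psd: "\<And>v. v \<in> carrier_vec d \<Longrightarrow> Qf H v \<ge> 0"
    and g: "ereal \<gamma> \<le> gap d H" and phi: "\<phi> \<in> carrier_vec d"
  shows "\<gamma> * Qf H \<phi> \<le> Sf H \<phi>"
proof -
  have Hc: "H \<in> carrier_mat d d" using H unfolding herm_def by blast
  obtain \<chi> \<phi>0 where chi: "\<chi> \<in> carrier_vec d" and p0: "\<phi>0 \<in> carrier_vec d"
    and dec: "\<phi> = H *\<^sub>v \<chi> + \<phi>0" and Hp0: "H *\<^sub>v \<phi>0 = 0\<^sub>v d"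
    using decomp[OF H phi] by blast
  define \<psi> where "\<psi> = H *\<^sub>v \<chi>"
  have psi: "\<psi> \<in> carrier_vec d" using Hc chi by (simp add: \<psi>_def)
  have Hpsi: "H *\<^sub>v \<psi> \<in> carrier_vec d" using Hc psi by simp
  have Hphi: "H *\<^sub>v \<phi> = H *\<^sub>v \<psi>"
    unfolding dec \<psi>_def[symmetric] mult_add_distrib_mat_vec[OF Hc psi p0] Hp0 using Hpsi by simp
  have "cinner \<phi>0 (H *\<^sub>v \<psi>) = cinner (H *\<^sub>v \<phi>0) \<psi>" by (rule herm_mult[OF H p0 psi])
  also have "\<dots> = 0" unfolding Hp0 by (rule cinner_zero_left[OF psi])
  finally have z0: "cinner \<phi>0 (H *\<^sub>v \<psi>) = 0" .
  have Qeq: "Qf H \<phi> = Qf H \<psi>"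
    unfolding Qf_def Hphi unfolding dec \<psi>_def[symmetric] cinner_add_left[OF psi p0 Hpsi] z0 by simp
  have Seq: "Sf H \<phi> = Sf H \<psi>" unfolding Sf_def Hphi ..
  show ?thesis
  proof (cases "\<gamma> \<le> 0")
    case True
    then have "\<gamma> * Qf H \<phi> \<le> 0" using psd[OF phi] by (simp add: mult_nonpos_nonneg)
    also have "0 \<le> Sf H \<phi>" unfolding Sf_def using Hc phi by (intro cinner_self_nonneg[of _ d]) simp
    finally show ?thesis .
  next
    case False
    then have gpos: "\<gamma> > 0" by simp
    show ?thesis
    proof (cases "\<psi> = 0\<^sub>v d")
      case True
      then have "Qf H \<psi> = 0" unfolding Qf_def using Hc by (simp add: cinner_zero_left)
      then show ?thesis using Qeq Seq cinner_self_nonneg[OF Hpsi] unfolding Sf_def by simp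
    next
      case False
      define r where "r = Re (cinner \<psi> \<psi>)"
      have r0: "r \<ge> 0" unfolding r_def by (rule cinner_self_nonneg[OF psi])
      have "r \<noteq> 0" using cinner_self_zero[OF psi] False unfolding r_def by blast
      with r0 have rpos: "r > 0" by simp
      have crr: "cinner \<psi> \<psi> = complex_of_real r" unfolding r_def by (rule cinner_self_real[OF psi])
      define s where "s = 1 / sqrt r"
      define \<psi>' where "\<psi>' = complex_of_real s \<cdot>\<^sub>v \<psi>"
      have psi': "\<psi>' \<in> carrier_vec d" using psi by (simp add: \<psi>'_def)
      have ss: "s * s * r = 1" unfolding s_def using rpos
        by (simp add: field_simps)
      have spsi: "complex_of_real s \<cdot>\<^sub>v \<psi> \<in> carrier_vec d" using psi by simp
      have sHpsi: "complex_of_real s \<cdot>\<^sub>v (H *\<^sub>v \<psi>) \<in> carrier_vec d" using Hpsi by simp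
      have n1: "cinner \<psi>' \<psi>' = 1"
        unfolding \<psi>'_def cinner_smult_left[OF psi spsi] cinner_smult_right[OF psi psi] crr
        using ss by (simp add: of_real_mult[symmetric] del: of_real_mult)
      have orth: "\<psi>' \<in> orth_compl d (kernel d H)"
        unfolding orth_compl_def
      proof (intro CollectI conjI ballI psi')
        fix v assume "v \<in> kernel d H"
        then have v: "v \<in> carrier_vec d" and Hv: "H *\<^sub>v v = 0\<^sub>v d" unfolding kernel_def by auto
        have "cinner \<psi> v = cinner \<chi> (H *\<^sub>v v)" unfolding \<psi>_def by (rule herm_mult[OF H chi v, symmetric])
        also have "\<dots> = 0" unfolding Hv by (rule cinner_zero_right[OF chi])
        finally show "cinner \<psi>' v = 0" unfolding \<psi>'_def cinner_smult_left[OF psi v] by simp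
      qed
      have "gap d H \<le> ereal (Re (cinner \<psi>' (H *\<^sub>v \<psi>')))"
        unfolding gap_def by (rule Inf_lower) (use orth n1 in blast)
      with g have "ereal \<gamma> \<le> ereal (Re (cinner \<psi>' (H *\<^sub>v \<psi>')))" by (rule order_trans)
      then have "\<gamma> \<le> Re (cinner \<psi>' (H *\<^sub>v \<psi>'))" by simp
      also have "Re (cinner \<psi>' (H *\<^sub>v \<psi>')) = s * s * Qf H \<psi>"
        unfolding \<psi>'_def Qf_def mult_mat_vec[OF Hc psi] cinner_smult_left[OF psi sHpsi]
          cinner_smult_right[OF psi Hpsi] by simp
      finally have g1: "\<gamma> \<le> s * s * Qf H \<psi>" .
      have g2: "\<gamma> * r \<le> Qf H \<psi>"
      proof -
        have "\<gamma> * r \<le> s * s * Qf H \<psi> * r" using g1 rpos by (simp add: mult_right_mono)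
        also have "\<dots> = Qf H \<psi>" using ss by (simp add: algebra_simps)
        finally show ?thesis .
      qed
      define t where "t = - 1 / \<gamma>"
      have "0 \<le> Re (cinner (\<psi> + complex_of_real t \<cdot>\<^sub>v (H *\<^sub>v \<psi>)) (\<psi> + complex_of_real t \<cdot>\<^sub>v (H *\<^sub>v \<psi>)))"
        using psi Hpsi by (intro cinner_self_nonneg[of _ d]) auto
      also have "\<dots> = r + t * Qf H \<psi> + t * Qf H \<psi> + t\<^sup>2 * Sf H \<psi>"
        unfolding bilin_expand[OF psi Hpsi psi Hpsi] r_def herm_Q_real[OF H psi] Sf_def Qf_def[symmetric] ..
      finally have q: "0 \<le> r + 2 * t * Qf H \<psi> + t\<^sup>2 * Sf H \<psi>" by simp
      have "0 \<le> \<gamma>\<^sup>2 * (r + 2 * t * Qf H \<psi> + t\<^sup>2 * Sf H \<psi>)" using q by simp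
      also have "\<dots> = \<gamma> * (\<gamma> * r) - 2 * \<gamma> * Qf H \<psi> + Sf H \<psi>"
        unfolding t_def using gpos by (simp add: field_simps power2_eq_square)
      finally have "0 \<le> \<gamma> * (\<gamma> * r) - 2 * \<gamma> * Qf H \<psi> + Sf H \<psi>" .
      moreover have "\<gamma> * (\<gamma> * r) \<le> \<gamma> * Qf H \<psi>" using g2 gpos by (simp add: mult_left_mono)
      ultimately show ?thesis unfolding Qeq Seq by linarith
    qed
  qed
qed

lemma gap_from:
  assumes H: "herm d H" and psd: "\<And>v. v \<in> carrier_vec d \<Longrightarrow> Qf H v \<ge> 0"
    and hyp: "\<And>\<phi>. \<phi> \<in> carrier_vec d \<Longrightarrow> c * Qf H \<phi> \<le> Sf H \<phi>"
  shows "ereal c \<le> gap d H"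
  unfolding gap_def
proof (rule Inf_greatest)
  have Hc: "H \<in> carrier_mat d d" using H unfolding herm_def by blast
  fix x assume "x \<in> {ereal (Re (cinner \<psi> (H *\<^sub>v \<psi>))) | \<psi>. \<psi> \<in> orth_compl d (kernel d H) \<and> cinner \<psi> \<psi> = 1}"
  then obtain \<psi> where x: "x = ereal (Re (cinner \<psi> (H *\<^sub>v \<psi>)))" and oc: "\<psi> \<in> orth_compl d (kernel d H)"
    and n1: "cinner \<psi> \<psi> = 1" by blast
  have psi: "\<psi> \<in> carrier_vec d" and orth: "\<And>v. v \<in> kernel d H \<Longrightarrow> cinner \<psi> v = 0"
    using oc unfolding orth_compl_def by auto
  have "c \<le> Qf H \<psi>"
  proof (cases "c \<le> 0")
    case True
    then show ?thesis using psd[OF psi] by linarith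
  next
    case False
    then have cpos: "c > 0" by simp
    obtain \<chi> \<phi>0 where chi: "\<chi> \<in> carrier_vec d" and p0: "\<phi>0 \<in> carrier_vec d"
      and dec: "\<psi> = H *\<^sub>v \<chi> + \<phi>0" and Hp0: "H *\<^sub>v \<phi>0 = 0\<^sub>v d"
      using decomp[OF H psi] by blast
    have Hchi: "H *\<^sub>v \<chi> \<in> carrier_vec d" using Hc chi by simp
    have HHchi: "H *\<^sub>v (H *\<^sub>v \<chi>) \<in> carrier_vec d" using Hc chi by simp
    have "\<phi>0 \<in> kernel d H" using p0 Hp0 unfolding kernel_def by simp
    then have "cinner \<psi> \<phi>0 = 0" by (rule orth)
    then have a: "cinner \<phi>0 \<psi> = 0" using cinner_commute[OF psi p0] by simp
    have b: "cinner \<phi>0 (H *\<^sub>v \<chi>) = 0"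
      unfolding herm_mult[OF H p0 chi] Hp0 by (rule cinner_zero_left[OF chi])
    have "cinner \<phi>0 \<psi> = cinner \<phi>0 (H *\<^sub>v \<chi>) + cinner \<phi>0 \<phi>0"
      unfolding dec by (rule cinner_add_right[OF Hchi p0 p0])
    then have "cinner \<phi>0 \<phi>0 = 0" using a b by simp
    then have "\<phi>0 = 0\<^sub>v d" using cinner_self_zero[OF p0] by simp
    then have psieq: "\<psi> = H *\<^sub>v \<chi>" using dec Hchi by simp
    define a1 where "a1 = Qf H \<chi>"
    define a3 where "a3 = Qf H \<psi>"
    have a2: "Sf H \<chi> = 1" unfolding Sf_def psieq[symmetric] n1 by simp
    have h1: "c * a1 \<le> 1" using hyp[OF chi] a2 unfolding a1_def by simp
    define t where "t = - 1 / c"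
    have vc: "\<chi> + complex_of_real t \<cdot>\<^sub>v (H *\<^sub>v \<chi>) \<in> carrier_vec d" using chi Hchi by simp
    have Hv_eq: "H *\<^sub>v (\<chi> + complex_of_real t \<cdot>\<^sub>v (H *\<^sub>v \<chi>)) = H *\<^sub>v \<chi> + complex_of_real t \<cdot>\<^sub>v (H *\<^sub>v (H *\<^sub>v \<chi>))"
      using Hc chi Hchi by (simp add: mult_add_distrib_mat_vec[OF Hc] mult_mat_vec[OF Hc])
    have "0 \<le> Qf H (\<chi> + complex_of_real t \<cdot>\<^sub>v (H *\<^sub>v \<chi>))" by (rule psd[OF vc])
    also have "Qf H (\<chi> + complex_of_real t \<cdot>\<^sub>v (H *\<^sub>v \<chi>)) = Re (cinner (\<chi> + complex_of_real t \<cdot>\<^sub>v (H *\<^sub>v \<chi>)) (H *\<^sub>v \<chi> + complex_of_real t \<cdot>\<^sub>v (H *\<^sub>v (H *\<^sub>v \<chi>))))"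
      unfolding Qf_def Hv_eq ..
    also have "\<dots> = a1 + t * 1 + t * 1 + t\<^sup>2 * a3"
      unfolding bilin_expand[OF chi Hchi Hchi HHchi] a1_def a3_def
      using herm_mult[OF H chi Hchi] a2 psieq unfolding Sf_def Qf_def by simp
    finally have q: "0 \<le> a1 + 2 * t + t\<^sup>2 * a3" by simp
    have "0 \<le> c\<^sup>2 * (a1 + 2 * t + t\<^sup>2 * a3)" using q by simp
    also have "\<dots> = c * (c * a1) - 2 * c + a3"
      unfolding t_def using cpos by (simp add: field_simps power2_eq_square)
    finally have "0 \<le> c * (c * a1) - 2 * c + a3" .
    moreover have "c * (c * a1) \<le> c" using h1 cpos by (metis mult_left_mono less_imp_le mult.right_neutral)
    ultimately show ?thesis unfolding a3_def by linarith
  qed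
  then show "ereal c \<le> x" unfolding x Qf_def by simp
qed

definition inW :: "nat \<Rightarrow> nat \<Rightarrow> nat \<Rightarrow> nat \<Rightarrow> bool" where
  "inW L n k a \<longleftrightarrow> (k \<le> a \<and> a < k + n) \<or> (a < k \<and> a + L < k + n)"

lemma cyc_eq:
  assumes "1 \<le> i" "i \<le> 2 * L"
  shows "cyc L i = (if i \<le> L then i else i - L)"
proof (cases "i \<le> L")
  case True
  then have "(i + L - 1) mod L = i - 1" using assms
    by (simp add: mod_if[of "i + L - 1" L] le_mod_geq)
  then show ?thesis using True assms unfolding cyc_def by simp
next
  case False
  have e: "i + L - 1 = (i - L - 1) + 2 * L" using False assms by simp
  have "(i + L - 1) mod L = (i - L - 1) mod L" unfolding e by (metis mod_mult_self1 mult.commute)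
  also have "\<dots> = i - L - 1" using False assms by simp
  finally have "(i + L - 1) mod L = i - L - 1" .
  then show ?thesis using False assms unfolding cyc_def by simp
qed

lemma window_image:
  assumes k: "k \<in> {1..L}" and n: "0 < n" "n < L"
  shows "cyc L ` {k..n+k-1} = {a\<in>{1..L}. inW L n k a}"
proof
  show "cyc L ` {k..n+k-1} \<subseteq> {a\<in>{1..L}. inW L n k a}"
  proof
    fix a assume "a \<in> cyc L ` {k..n+k-1}"
    then obtain i where i: "i \<in> {k..n+k-1}" and a: "a = cyc L i" by blast
    have "a = (if i \<le> L then i else i - L)" unfolding a using i k n by (intro cyc_eq) auto
    then show "a \<in> {a\<in>{1..L}. inW L n k a}" using i k n unfolding inW_def by auto
  qed
next
  show "{a\<in>{1..L}. inW L n k a} \<subseteq> cyc L ` {k..n+k-1}"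
  proof
    fix a assume a: "a \<in> {a\<in>{1..L}. inW L n k a}"
    show "a \<in> cyc L ` {k..n+k-1}"
    proof (cases "k \<le> a")
      case True
      then have "a \<in> {k..n+k-1}" "cyc L a = a" using a k n unfolding inW_def by (auto simp: cyc_eq)
      then show ?thesis by (metis image_eqI)
    next
      case False
      then have "a + L \<in> {k..n+k-1}" "cyc L (a + L) = a" using a k n unfolding inW_def by (auto simp: cyc_eq)
      then show ?thesis by (metis image_eqI)
    qed
  qed
qed

lemma window_inj:
  assumes k: "k \<in> {1..L}" and n: "0 < n" "n < L"
  shows "inj_on (cyc L) {k..n+k-1}"
proof
  fix i j assume i: "i \<in> {k..n+k-1}" and j: "j \<in> {k..n+k-1}" and e: "cyc L i = cyc L j"
  have "cyc L i = (if i \<le> L then i else i - L)" using i k n by (intro cyc_eq) auto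
  moreover have "cyc L j = (if j \<le> L then j else j - L)" using j k n by (intro cyc_eq) auto
  ultimately show "i = j" using e i j k n by (auto split: if_splits)
qed

lemma card_K:
  assumes a: "a \<in> {1..L}" and n: "0 < n" "n < L"
  shows "card {k\<in>{1..L}. inW L n k a} = n"
proof (cases "n \<le> a")
  case True
  then have "{k\<in>{1..L}. inW L n k a} = {a+1-n..a}" using a n unfolding inW_def by auto
  then show ?thesis using True by simp
next
  case False
  then have e: "{k\<in>{1..L}. inW L n k a} = {1..a} \<union> {a+L+1-n..L}" using a n unfolding inW_def by auto
  have "card ({1..a} \<union> {a+L+1-n..L}) = card {1..a} + card {a+L+1-n..L}"
    using n False by (intro card_Un_disjoint) auto
  then show ?thesis unfolding e using False a n by simp
qed

definition k0 :: "nat \<Rightarrow> nat \<Rightarrow> nat \<Rightarrow> nat" where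
  "k0 L n a = (if n \<le> a then a + 1 - n else a + L + 1 - n)"

definition nxt :: "nat \<Rightarrow> nat \<Rightarrow> nat" where
  "nxt L a = (if a = L then 1 else a + 1)"

lemma witness_ne:
  assumes a: "a \<in> {1..L}" and b: "b \<in> {1..L}" and ab: "a \<noteq> b" and n: "0 < n" "n < L"
  shows "\<exists>k\<in>{1..L}. inW L n k a \<and> \<not> inW L n k b"
proof -
  have "(inW L n a a \<and> \<not> inW L n a b) \<or> (inW L n (k0 L n a) a \<and> \<not> inW L n (k0 L n a) b)
     \<or> (inW L n (nxt L b) a \<and> \<not> inW L n (nxt L b) b)"
    using a b ab n unfolding inW_def k0_def nxt_def by auto
  moreover have "a \<in> {1..L}" "k0 L n a \<in> {1..L}" "nxt L b \<in> {1..L}"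
    using a b n unfolding k0_def nxt_def by auto
  ultimately show ?thesis by blast
qed


lemma adj_pt:
  assumes a: "a \<in> {1..L}" and k: "k \<in> {1..L}" and n: "0 < n" "n < L"
  shows "(inW L n k a \<and> inW L n k (nxt L a)) \<longleftrightarrow> (inW L n k a \<and> k \<noteq> k0 L n a)"
proof (cases "a = L")
  case True
  then show ?thesis using a k n unfolding inW_def k0_def nxt_def by auto
next
  case False
  then show ?thesis using a k n unfolding inW_def k0_def nxt_def by auto
qed

lemma card_K_ne:
  assumes a: "a \<in> {1..L}" and b: "b \<in> {1..L}" and ab: "a \<noteq> b" and n: "0 < n" "n < L"
  shows "card {k\<in>{1..L}. inW L n k a \<and> inW L n k b} \<le> n - 1"
proof -
  obtain k where k: "k \<in> {1..L}" "inW L n k a" "\<not> inW L n k b" using witness_ne[OF a b ab n] by blast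
  have "{k\<in>{1..L}. inW L n k a \<and> inW L n k b} \<subset> {k\<in>{1..L}. inW L n k a}"
  proof (rule psubsetI)
    show "{k\<in>{1..L}. inW L n k a \<and> inW L n k b} \<subseteq> {k\<in>{1..L}. inW L n k a}" by blast
    show "{k\<in>{1..L}. inW L n k a \<and> inW L n k b} \<noteq> {k\<in>{1..L}. inW L n k a}" using k by blast
  qed
  then have "card {k\<in>{1..L}. inW L n k a \<and> inW L n k b} < card {k\<in>{1..L}. inW L n k a}"
    by (intro psubset_card_mono) auto
  then show ?thesis using card_K[OF a n] by simp
qed

lemma card_K_adj:
  assumes a: "a \<in> {1..L}" and n: "0 < n" "n < L"
  shows "card {k\<in>{1..L}. inW L n k a \<and> inW L n k (nxt L a)} = n - 1"
proof -
  have e: "{k\<in>{1..L}. inW L n k a \<and> inW L n k (nxt L a)} = {k\<in>{1..L}. inW L n k a} - {k0 L n a}"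
    using adj_pt[OF a _ n] by blast
  have "k0 L n a \<in> {k\<in>{1..L}. inW L n k a}"
    using a n unfolding inW_def k0_def by auto
  then show ?thesis unfolding e using card_K[OF a n] by (simp add: card_Diff_singleton)
qed

lemma sum_count1:
  fixes e :: "nat \<Rightarrow> complex"
  assumes K: "finite K" and A: "finite A"
  shows "(\<Sum>k\<in>K. \<Sum>a\<in>{a\<in>A. R k a}. e a) = (\<Sum>a\<in>A. of_nat (card {k\<in>K. R k a}) * e a)"
proof -
  have "(\<Sum>k\<in>K. \<Sum>a\<in>{a\<in>A. R k a}. e a) = (\<Sum>k\<in>K. \<Sum>a\<in>A. if R k a then e a else 0)"
    using A by (simp add: sum.inter_filter)
  also have "\<dots> = (\<Sum>a\<in>A. \<Sum>k\<in>K. if R k a then e a else 0)" by (rule sum.swap)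
  also have "\<dots> = (\<Sum>a\<in>A. of_nat (card {k\<in>K. R k a}) * e a)"
    using K by (simp add: sum.inter_filter[symmetric])
  finally show ?thesis .
qed

lemma sum_count2:
  fixes g :: "nat \<Rightarrow> nat \<Rightarrow> complex"
  assumes K: "finite K" and A: "finite A"
  shows "(\<Sum>k\<in>K. \<Sum>a\<in>{a\<in>A. R k a}. \<Sum>b\<in>{b\<in>A. R k b}. g a b)
       = (\<Sum>a\<in>A. \<Sum>b\<in>A. of_nat (card {k\<in>K. R k a \<and> R k b}) * g a b)"
proof -
  have "(\<Sum>k\<in>K. \<Sum>a\<in>{a\<in>A. R k a}. \<Sum>b\<in>{b\<in>A. R k b}. g a b)
      = (\<Sum>k\<in>K. \<Sum>a\<in>A. \<Sum>b\<in>A. if R k a \<and> R k b then g a b else 0)"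
  proof (rule sum.cong[OF refl])
    fix k
    have "(\<Sum>a\<in>{a\<in>A. R k a}. \<Sum>b\<in>{b\<in>A. R k b}. g a b)
        = (\<Sum>a\<in>A. if R k a then (\<Sum>b\<in>{b\<in>A. R k b}. g a b) else 0)"
      by (rule sum.inter_filter[OF A])
    also have "\<dots> = (\<Sum>a\<in>A. if R k a then (\<Sum>b\<in>A. if R k b then g a b else 0) else 0)"
      by (intro sum.cong refl) (simp only: sum.inter_filter[OF A])
    also have "\<dots> = (\<Sum>a\<in>A. \<Sum>b\<in>A. if R k a \<and> R k b then g a b else 0)"
      by (intro sum.cong refl) auto
    finally show "(\<Sum>a\<in>{a\<in>A. R k a}. \<Sum>b\<in>{b\<in>A. R k b}. g a b)
        = (\<Sum>a\<in>A. \<Sum>b\<in>A. if R k a \<and> R k b then g a b else 0)" .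
  qed
  also have "\<dots> = (\<Sum>a\<in>A. \<Sum>k\<in>K. \<Sum>b\<in>A. if R k a \<and> R k b then g a b else 0)" by (rule sum.swap)
  also have "\<dots> = (\<Sum>a\<in>A. \<Sum>b\<in>A. \<Sum>k\<in>K. if R k a \<and> R k b then g a b else 0)"
    by (intro sum.cong refl) (rule sum.swap)
  also have "\<dots> = (\<Sum>a\<in>A. \<Sum>b\<in>A. of_nat (card {k\<in>K. R k a \<and> R k b}) * g a b)"
    using K by (simp add: sum.inter_filter[symmetric])
  finally show ?thesis .
qed
lemma quad_sum:
  assumes A: "finite A" and Pc: "\<And>a. a \<in> A \<Longrightarrow> P a \<in> carrier_mat d d" and phi: "\<phi> \<in> carrier_vec d"
    and Hm: "Hm \<in> carrier_mat d d" and e: "\<And>x. x < d \<Longrightarrow> (Hm *\<^sub>v \<phi>) $ x = (\<Sum>a\<in>A. (P a *\<^sub>v \<phi>) $ x)"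
  shows "cinner (Hm *\<^sub>v \<phi>) (Hm *\<^sub>v \<phi>) = (\<Sum>a\<in>A. \<Sum>b\<in>A. cinner (P a *\<^sub>v \<phi>) (P b *\<^sub>v \<phi>))"
    and "cinner \<phi> (Hm *\<^sub>v \<phi>) = (\<Sum>a\<in>A. cinner \<phi> (P a *\<^sub>v \<phi>))"
proof -
  have Hv: "Hm *\<^sub>v \<phi> \<in> carrier_vec d" using Hm phi by simp
  have Pv: "\<And>a. a \<in> A \<Longrightarrow> P a *\<^sub>v \<phi> \<in> carrier_vec d" using Pc phi by (metis mult_mat_vec_carrier)
  show "cinner \<phi> (Hm *\<^sub>v \<phi>) = (\<Sum>a\<in>A. cinner \<phi> (P a *\<^sub>v \<phi>))"
    by (rule cinner_sum_right[OF phi Hv Pv e])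
  have "cinner (Hm *\<^sub>v \<phi>) (Hm *\<^sub>v \<phi>) = (\<Sum>a\<in>A. cinner (P a *\<^sub>v \<phi>) (Hm *\<^sub>v \<phi>))"
    by (rule cinner_sum_left[OF Hv Hv Pv e])
  also have "\<dots> = (\<Sum>a\<in>A. \<Sum>b\<in>A. cinner (P a *\<^sub>v \<phi>) (P b *\<^sub>v \<phi>))"
    by (rule sum.cong[OF refl], rule cinner_sum_right[OF Pv Hv Pv e])
  finally show "cinner (Hm *\<^sub>v \<phi>) (Hm *\<^sub>v \<phi>) = (\<Sum>a\<in>A. \<Sum>b\<in>A. cinner (P a *\<^sub>v \<phi>) (P b *\<^sub>v \<phi>))" .
qed

theorem theorem3p10:
  fixes d L n :: nat and P :: "nat \<Rightarrow> complex mat"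
  assumes proj: "\<And>i. i \<in> {1..L} \<Longrightarrow> orth_proj d (P i)"
    and comm: "\<And>i j. i \<in> {1..L} \<Longrightarrow> j \<in> {1..L} \<Longrightarrow> P i * P j \<noteq> P j * P i \<Longrightarrow>
                 (i = j + 1 \<or> j = i + 1 \<or> {i, j} = {1, L})"
    and n: "1 < n" "n < L"
    and ker: "kernel d (opsum d P {1..L}) \<noteq> {0\<^sub>v d}"
  shows "gap d (opsum d P {1..L}) \<ge>
           ereal (real n / (real n - 1)) *
             ((MIN k\<in>{1..L}. gap d (opsum d (\<lambda>i. P (cyc L i)) {k..n + k - 1})) - ereal (1 / real n))"
proof -
  have n0: "0 < n" and nL: "n < L" using n by auto
  define H where "H = opsum d P {1..L}"
  define Hk where "Hk = (\<lambda>k. opsum d (\<lambda>i. P (cyc L i)) {k..n + k - 1})"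
  define S where "S = (\<lambda>k. {a\<in>{1..L}. inW L n k a})"
  define N where "N = (\<lambda>a b. card {k\<in>{1..L}. inW L n k a \<and> inW L n k b})"
  define cc where "cc = (\<lambda>\<phi> a b. cinner (P a *\<^sub>v \<phi>) (P b *\<^sub>v \<phi>))"
  have Pc: "\<And>a. a \<in> {1..L} \<Longrightarrow> P a \<in> carrier_mat d d" using proj unfolding orth_proj_def by blast
  have Ph: "\<And>a. a \<in> {1..L} \<Longrightarrow> herm d (P a)" using proj orth_proj_herm by blast
  have PP: "\<And>a. a \<in> {1..L} \<Longrightarrow> P a * P a = P a" using proj unfolding orth_proj_def by blast
  have Ssub: "\<And>k. S k \<subseteq> {1..L}" unfolding S_def by blast
  have Sfin: "\<And>k. finite (S k)" using Ssub by (meson finite_atLeastAtMost finite_subset)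
  have reidx: "(\<Sum>i\<in>{k..n+k-1}. f (cyc L i)) = (\<Sum>a\<in>S k. f a)" if k: "k \<in> {1..L}" for k and f :: "nat \<Rightarrow> complex"
  proof -
    have "(\<Sum>a\<in>S k. f a) = (\<Sum>a\<in>cyc L ` {k..n+k-1}. f a)" unfolding S_def window_image[OF k n0 nL] ..
    also have "\<dots> = (\<Sum>i\<in>{k..n+k-1}. f (cyc L i))"
      using sum.reindex[OF window_inj[OF k n0 nL], of f] by simp
    finally show ?thesis by simp
  qed
  have cyc_in: "cyc L i \<in> {1..L}" if "k \<in> {1..L}" "i \<in> {k..n+k-1}" for k i
    using window_image[OF that(1) n0 nL] that(2) by blast
  have Hh: "herm d H" unfolding H_def by (rule opsum_herm) (rule Ph)
  have Hkh: "herm d (Hk k)" if k: "k \<in> {1..L}" for k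
    unfolding Hk_def by (rule opsum_herm) (use Ph cyc_in[OF k] in blast)
  have Hc: "H \<in> carrier_mat d d" unfolding H_def by simp
  have Hkc: "\<And>k. Hk k \<in> carrier_mat d d" unfolding Hk_def by simp
  have Hexp: "(H *\<^sub>v \<phi>) $ x = (\<Sum>a\<in>{1..L}. (P a *\<^sub>v \<phi>) $ x)" if "\<phi> \<in> carrier_vec d" "x < d" for \<phi> x
    unfolding H_def by (rule opsum_mult[OF Pc that])
  have Hkexp: "(Hk k *\<^sub>v \<phi>) $ x = (\<Sum>a\<in>S k. (P a *\<^sub>v \<phi>) $ x)"
    if k: "k \<in> {1..L}" and phi: "\<phi> \<in> carrier_vec d" and x: "x < d" for k \<phi> x
  proof -
    have "(Hk k *\<^sub>v \<phi>) $ x = (\<Sum>i\<in>{k..n+k-1}. (P (cyc L i) *\<^sub>v \<phi>) $ x)"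
      unfolding Hk_def by (rule opsum_mult) (use Pc cyc_in[OF k] phi x in auto)
    also have "\<dots> = (\<Sum>a\<in>S k. (P a *\<^sub>v \<phi>) $ x)" by (rule reidx[OF k, of "\<lambda>a. (P a *\<^sub>v \<phi>) $ x"])
    finally show ?thesis .
  qed
  have SH: "Sf H \<phi> = Re (\<Sum>a\<in>{1..L}. \<Sum>b\<in>{1..L}. cc \<phi> a b)"
    and QH: "cinner \<phi> (H *\<^sub>v \<phi>) = (\<Sum>a\<in>{1..L}. cinner \<phi> (P a *\<^sub>v \<phi>))" if phi: "\<phi> \<in> carrier_vec d" for \<phi>
    using quad_sum[of "{1..L}" P d \<phi> H, OF _ Pc phi Hc Hexp[OF phi]] unfolding Sf_def cc_def by auto
  have SK: "Sf (Hk k) \<phi> = Re (\<Sum>a\<in>S k. \<Sum>b\<in>S k. cc \<phi> a b)"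
    and QK: "cinner \<phi> (Hk k *\<^sub>v \<phi>) = (\<Sum>a\<in>S k. cinner \<phi> (P a *\<^sub>v \<phi>))"
    if k: "k \<in> {1..L}" and phi: "\<phi> \<in> carrier_vec d" for k \<phi>
  proof -
    have PcS: "\<And>a. a \<in> S k \<Longrightarrow> P a \<in> carrier_mat d d" using Pc Ssub by blast
    note q = quad_sum[of "S k" P d \<phi> "Hk k", OF Sfin PcS phi Hkc Hkexp[OF k phi]]
    show "Sf (Hk k) \<phi> = Re (\<Sum>a\<in>S k. \<Sum>b\<in>S k. cc \<phi> a b)" using q(1) unfolding Sf_def cc_def by simp
    show "cinner \<phi> (Hk k *\<^sub>v \<phi>) = (\<Sum>a\<in>S k. cinner \<phi> (P a *\<^sub>v \<phi>))" by (rule q(2))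
  qed
  have cc_diag: "cinner \<phi> (P a *\<^sub>v \<phi>) = cc \<phi> a a" if phi: "\<phi> \<in> carrier_vec d" and a: "a \<in> {1..L}" for \<phi> a
  proof -
    have Pa: "P a *\<^sub>v \<phi> \<in> carrier_vec d" using Pc[OF a] phi by simp
    have "cc \<phi> a a = cinner \<phi> (P a *\<^sub>v (P a *\<^sub>v \<phi>))" unfolding cc_def
      by (rule herm_mult[OF Ph[OF a] phi Pa, symmetric])
    also have "P a *\<^sub>v (P a *\<^sub>v \<phi>) = P a *\<^sub>v \<phi>"
      using PP[OF a] assoc_mult_mat_vec[OF Pc[OF a] Pc[OF a] phi] by simp
    finally show ?thesis by simp
  qed
  have cc_diag_nonneg: "Re (cc \<phi> a a) \<ge> 0" if phi: "\<phi> \<in> carrier_vec d" and a: "a \<in> {1..L}" for \<phi> a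
    unfolding cc_def using Pc[OF a] phi by (intro cinner_self_nonneg[of _ d]) simp
  have cc_comm: "Re (cc \<phi> a b) \<ge> 0"
    if phi: "\<phi> \<in> carrier_vec d" and a: "a \<in> {1..L}" and b: "b \<in> {1..L}" and ab: "P a * P b = P b * P a" for \<phi> a b
  proof -
    have Pac: "P a \<in> carrier_mat d d" and Pbc: "P b \<in> carrier_mat d d" using Pc a b by auto
    have v1: "P a *\<^sub>v \<phi> \<in> carrier_vec d" and v2: "P b *\<^sub>v \<phi> \<in> carrier_vec d"
      and v3: "P b *\<^sub>v (P a *\<^sub>v \<phi>) \<in> carrier_vec d" using Pac Pbc phi by auto
    have m1: "P a *\<^sub>v (P b *\<^sub>v \<phi>) = P a *\<^sub>v (P b *\<^sub>v (P a *\<^sub>v \<phi>))"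
    proof -
      have "P a * P b = (P a * P a) * P b" using PP[OF a] by simp
      also have "\<dots> = P a * (P a * P b)" using Pac Pbc by (simp add: assoc_mult_mat)
      also have "\<dots> = P a * (P b * P a)" using ab by simp
      finally have e: "P a * P b = P a * (P b * P a)" .
      have "P a *\<^sub>v (P b *\<^sub>v \<phi>) = (P a * P b) *\<^sub>v \<phi>" using Pac Pbc phi by simp
      also have "\<dots> = (P a * (P b * P a)) *\<^sub>v \<phi>" unfolding e ..
      also have "\<dots> = P a *\<^sub>v (P b *\<^sub>v (P a *\<^sub>v \<phi>))"
      proof -
        have PbPa: "P b * P a \<in> carrier_mat d d" using Pac Pbc by simp
        show ?thesis by (simp add: assoc_mult_mat_vec[OF Pac PbPa phi] assoc_mult_mat_vec[OF Pbc Pac phi])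
      qed
      finally show ?thesis .
    qed
    have m2: "P b *\<^sub>v (P a *\<^sub>v \<phi>) = P b *\<^sub>v (P b *\<^sub>v (P a *\<^sub>v \<phi>))"
      using PP[OF b] assoc_mult_mat_vec[OF Pbc Pbc v1] by simp
    have "cc \<phi> a b = cinner \<phi> (P a *\<^sub>v (P b *\<^sub>v \<phi>))" unfolding cc_def
      by (rule herm_mult[OF Ph[OF a] phi v2, symmetric])
    also have "\<dots> = cinner \<phi> (P a *\<^sub>v (P b *\<^sub>v (P a *\<^sub>v \<phi>)))" unfolding m1 ..
    also have "\<dots> = cinner (P a *\<^sub>v \<phi>) (P b *\<^sub>v (P a *\<^sub>v \<phi>))" by (rule herm_mult[OF Ph[OF a] phi v3])
    also have "\<dots> = cinner (P a *\<^sub>v \<phi>) (P b *\<^sub>v (P b *\<^sub>v (P a *\<^sub>v \<phi>)))" by (rule arg_cong[where f="cinner (P a *\<^sub>v \<phi>)", OF m2])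
    also have "\<dots> = cinner (P b *\<^sub>v (P a *\<^sub>v \<phi>)) (P b *\<^sub>v (P a *\<^sub>v \<phi>))" by (rule herm_mult[OF Ph[OF b] v1 v3])
    finally show ?thesis using cinner_self_nonneg[OF v3] by simp
  qed
  have Ndiag: "N a a = n" if a: "a \<in> {1..L}" for a unfolding N_def using card_K[OF a n0 nL] by simp
  have Nsym: "N a b = N b a" for a b unfolding N_def by (simp add: conj_commute)
  have Nne: "N a b \<le> n - 1" if a: "a \<in> {1..L}" and b: "b \<in> {1..L}" and ab: "a \<noteq> b" for a b
    unfolding N_def by (rule card_K_ne[OF a b ab n0 nL])
  have Nadj: "N a b = n - 1" if a: "a \<in> {1..L}" and b: "b \<in> {1..L}" and ab: "a \<noteq> b"
    and nc: "P a * P b \<noteq> P b * P a" for a b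
  proof -
    from comm[OF a b nc] have "a = b + 1 \<or> b = a + 1 \<or> {a, b} = {1, L}" .
    then have "b = nxt L a \<or> a = nxt L b" using a b ab unfolding nxt_def by (auto simp: doubleton_eq_iff)
    then show ?thesis
    proof
      assume "b = nxt L a" then show ?thesis unfolding N_def using card_K_adj[OF a n0 nL] by simp
    next
      assume "a = nxt L b" then show ?thesis unfolding Nsym[of a b] unfolding N_def using card_K_adj[OF b n0 nL] by simp
    qed
  qed
  have pt: "real (N a b) * Re (cc \<phi> a b) \<le> real (n - 1) * Re (cc \<phi> a b) + (if a = b then Re (cc \<phi> a b) else 0)"
    if phi: "\<phi> \<in> carrier_vec d" and a: "a \<in> {1..L}" and b: "b \<in> {1..L}" for \<phi> a b
  proof (cases "a = b")
    case True
    then show ?thesis using Ndiag[OF a] n0 by (simp add: of_nat_diff algebra_simps)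
  next
    case False
    show ?thesis
    proof (cases "P a * P b = P b * P a")
      case True
      have "real (N a b) \<le> real (n - 1)" using Nne[OF a b False] by simp
      then show ?thesis using cc_comm[OF phi a b True] False by (simp add: mult_right_mono)
    next
      case nc: False
      then show ?thesis using Nadj[OF a b False nc] False by simp
    qed
  qed
  have sumS: "(\<Sum>k\<in>{1..L}. Sf (Hk k) \<phi>) \<le> real (n - 1) * Sf H \<phi> + Qf H \<phi>" if phi: "\<phi> \<in> carrier_vec d" for \<phi>
  proof -
    have "(\<Sum>k\<in>{1..L}. Sf (Hk k) \<phi>) = Re (\<Sum>k\<in>{1..L}. \<Sum>a\<in>S k. \<Sum>b\<in>S k. cc \<phi> a b)"
      using SK[OF _ phi] by (simp add: Re_sum)
    also have "(\<Sum>k\<in>{1..L}. \<Sum>a\<in>S k. \<Sum>b\<in>S k. cc \<phi> a b) = (\<Sum>a\<in>{1..L}. \<Sum>b\<in>{1..L}. of_nat (N a b) * cc \<phi> a b)"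
      unfolding S_def N_def by (rule sum_count2) auto
    also have "Re \<dots> = (\<Sum>a\<in>{1..L}. \<Sum>b\<in>{1..L}. real (N a b) * Re (cc \<phi> a b))"
      by (simp add: Re_sum)
    also have "\<dots> \<le> (\<Sum>a\<in>{1..L}. \<Sum>b\<in>{1..L}. real (n - 1) * Re (cc \<phi> a b) + (if a = b then Re (cc \<phi> a b) else 0))"
      by (intro sum_mono pt[OF phi]) auto
    also have "\<dots> = real (n - 1) * (\<Sum>a\<in>{1..L}. \<Sum>b\<in>{1..L}. Re (cc \<phi> a b)) + (\<Sum>a\<in>{1..L}. Re (cc \<phi> a a))"
      by (simp add: sum.distrib sum_distrib_left)
    also have "(\<Sum>a\<in>{1..L}. \<Sum>b\<in>{1..L}. Re (cc \<phi> a b)) = Sf H \<phi>"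
      unfolding SH[OF phi] by (simp add: Re_sum)
    also have "(\<Sum>a\<in>{1..L}. Re (cc \<phi> a a)) = Qf H \<phi>"
      unfolding Qf_def QH[OF phi] Re_sum using cc_diag[OF phi] by simp
    finally show ?thesis .
  qed
  have sumQ: "(\<Sum>k\<in>{1..L}. Qf (Hk k) \<phi>) = real n * Qf H \<phi>" if phi: "\<phi> \<in> carrier_vec d" for \<phi>
  proof -
    have "(\<Sum>k\<in>{1..L}. Qf (Hk k) \<phi>) = Re (\<Sum>k\<in>{1..L}. \<Sum>a\<in>S k. cc \<phi> a a)"
    proof -
      have "Qf (Hk k) \<phi> = Re (\<Sum>a\<in>S k. cc \<phi> a a)" if k: "k \<in> {1..L}" for k
      proof -
        have "(\<Sum>a\<in>S k. cinner \<phi> (P a *\<^sub>v \<phi>)) = (\<Sum>a\<in>S k. cc \<phi> a a)"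
          by (rule sum.cong[OF refl]) (use cc_diag[OF phi] Ssub in blast)
        then show ?thesis unfolding Qf_def QK[OF k phi] by simp
      qed
      then show ?thesis by (simp add: Re_sum)
    qed
    also have "(\<Sum>k\<in>{1..L}. \<Sum>a\<in>S k. cc \<phi> a a) = (\<Sum>a\<in>{1..L}. of_nat (card {k\<in>{1..L}. inW L n k a}) * cc \<phi> a a)"
      unfolding S_def by (rule sum_count1) auto
    also have "\<dots> = (\<Sum>a\<in>{1..L}. of_nat n * cc \<phi> a a)"
    proof (rule sum.cong[OF refl])
      fix a assume a: "a \<in> {1..L}"
      show "of_nat (card {k\<in>{1..L}. inW L n k a}) * cc \<phi> a a = of_nat n * cc \<phi> a a"
        unfolding card_K[OF a n0 nL] ..
    qed
    also have "Re \<dots> = real n * Qf H \<phi>"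
      unfolding Qf_def QH[OF phi] Re_sum sum_distrib_left using cc_diag[OF phi] by simp
    finally show ?thesis .
  qed
  have psdK: "Qf (Hk k) \<phi> \<ge> 0" if k: "k \<in> {1..L}" and phi: "\<phi> \<in> carrier_vec d" for k \<phi>
  proof -
    have "Qf (Hk k) \<phi> = (\<Sum>a\<in>S k. Re (cc \<phi> a a))"
      unfolding Qf_def QK[OF k phi] Re_sum
    proof (rule sum.cong[OF refl])
      fix a assume "a \<in> S k"
      then have a: "a \<in> {1..L}" using Ssub by blast
      show "Re (cinner \<phi> (P a *\<^sub>v \<phi>)) = Re (cc \<phi> a a)" using cc_diag[OF phi a] by simp
    qed
    also have "\<dots> \<ge> 0" using cc_diag_nonneg[OF phi] Ssub by (intro sum_nonneg) blast
    finally show ?thesis .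
  qed
  have psdH: "Qf H \<phi> \<ge> 0" if phi: "\<phi> \<in> carrier_vec d" for \<phi>
  proof -
    have "Qf H \<phi> = (\<Sum>a\<in>{1..L}. Re (cc \<phi> a a))"
      unfolding Qf_def QH[OF phi] Re_sum
    proof (rule sum.cong[OF refl])
      fix a assume a: "a \<in> {1..L}"
      show "Re (cinner \<phi> (P a *\<^sub>v \<phi>)) = Re (cc \<phi> a a)" using cc_diag[OF phi a] by simp
    qed
    also have "\<dots> \<ge> 0" using cc_diag_nonneg[OF phi] by (intro sum_nonneg) auto
    finally show ?thesis .
  qed
  have key: "ereal ((real n * \<gamma> - 1) / (real n - 1)) \<le> gap d H"
    if g: "\<And>k. k \<in> {1..L} \<Longrightarrow> ereal \<gamma> \<le> gap d (Hk k)" for \<gamma>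
  proof (rule gap_from[OF Hh psdH])
    fix \<phi> :: "complex vec" assume phi: "\<phi> \<in> carrier_vec d"
    have "\<gamma> * (real n * Qf H \<phi>) = (\<Sum>k\<in>{1..L}. \<gamma> * Qf (Hk k) \<phi>)"
      unfolding sumQ[OF phi, symmetric] by (simp add: sum_distrib_left)
    also have "\<dots> \<le> (\<Sum>k\<in>{1..L}. Sf (Hk k) \<phi>)"
    proof (rule sum_mono)
      fix k assume k: "k \<in> {1..L}"
      show "\<gamma> * Qf (Hk k) \<phi> \<le> Sf (Hk k) \<phi>" by (rule gap_lower[OF Hkh[OF k] psdK[OF k] g[OF k] phi])
    qed
    also have "\<dots> \<le> real (n - 1) * Sf H \<phi> + Qf H \<phi>" by (rule sumS[OF phi])
    finally have "(real n * \<gamma> - 1) * Qf H \<phi> \<le> (real n - 1) * Sf H \<phi>"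
      using n0 by (simp add: of_nat_diff algebra_simps)
    moreover have "real n - 1 > 0" using n by simp
    ultimately show "(real n * \<gamma> - 1) / (real n - 1) * Qf H \<phi> \<le> Sf H \<phi>"
      by (simp add: field_simps)
  qed
  have G_eq: "(MIN k\<in>{1..L}. gap d (opsum d (\<lambda>i. P (cyc L i)) {k..n + k - 1})) = (MIN k\<in>{1..L}. gap d (Hk k))"
    by (simp add: Hk_def)
  define G where "G = (MIN k\<in>{1..L}. gap d (Hk k))"
  have Gle: "G \<le> gap d (Hk k)" if "k \<in> {1..L}" for k
    unfolding G_def using that by (intro Min_le) auto
  have n1r: "real n - 1 > 0" using n by simp
  show ?thesis
  proof (cases G)
    case (real \<gamma>)
    have "ereal ((real n * \<gamma> - 1) / (real n - 1)) \<le> gap d H"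
      by (rule key) (use Gle real in auto)
    moreover have "ereal (real n / (real n - 1)) * (G - ereal (1 / real n)) = ereal ((real n * \<gamma> - 1) / (real n - 1))"
      unfolding real using n0 n1r by (simp add: field_simps)
    ultimately show ?thesis unfolding G_eq H_def[symmetric] G_def[symmetric] by simp
  next
    case PInf
    have "gap d H = \<infinity>"
    proof (rule ereal_top)
      fix B
      have "ereal ((real n * ((B * (real n - 1) + 1) / real n) - 1) / (real n - 1)) \<le> gap d H"
        by (rule key) (use Gle PInf in auto)
      moreover have "(real n * ((B * (real n - 1) + 1) / real n) - 1) / (real n - 1) = B"
        using n0 n1r by (simp add: field_simps)
      ultimately show "ereal B \<le> gap d H" by simp
    qed
    then show ?thesis unfolding G_eq H_def[symmetric] G_def[symmetric] by simp
  next
    case MInf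
    then show ?thesis unfolding G_eq H_def[symmetric] G_def[symmetric] using n1r by simp
  qed
qed


end
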